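(* Let $(Y,\lambda)\in\{-1,1\}\times\{-1,1\}^m$ follow the Ising model $$P(Y,\lambda)=\frac1Z\exp\Big(\theta_Y Y+\sum_k\theta_k\lambda_kY+\sum_{(k,l)\in E_\lambda}\theta_{kl}\lambda_k\lambda_l\Big),$$ where $E_\lambda$ is a set of unordered pairs of distinct sources, each source in at most one pair. Let $(i,j)\in E_\lambda$. Then $$\varepsilon_{ij}:=\mathbb E[\lambda_i\lambda_j]-\mathbb E[\lambda_iY]\mathbb E[\lambda_jY]=\Delta_{ij}-\Delta_ia_j'-\Delta_ja_i'-\Delta_i\Delta_j,$$ where $$z_{ij}=\sum_{s_i,s_j\in\{\pm1\}}\exp(s_i\theta_i+s_j\theta_j+s_is_j\theta_{ij}),\qquad z'_{ij}=\sum_{s_i,s_j\in\{\pm1\}}\exp(s_i\theta_i+s_j\theta_j),$$ $$\Delta_i=\frac{2}{z_{ij}z'_{ij}}(e^{\theta_{ij}}-e^{-\theta_{ij}})(e^{2\theta_j}-e^{-2\theta_j}),\qquad \Delta_j=\frac{2}{z_{ij}z'_{ij}}(e^{\theta_{ij}}-e^{-\theta_{ij}})(e^{2\theta_i}-e^{-2\theta_i}),$$ $$\Delta_{ij}=\frac{2}{z_{ij}z'_{ij}}(e^{\theta_{ij}}-e^{-\theta_{ij}})(e^{2\theta_i}+e^{-2\theta_i}+e^{2\theta_j}+e^{-2\theta_j}),$$ $$a_i'=\frac{2}{z'_{ij}}e^{\theta_i}(e^{\theta_j}+e^{-\theta_j})-1,\qquad a_j'=\frac{2}{z'_{ij}}e^{\theta_j}(e^{\theta_i}+e^{-\theta_i})-1.$$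 Moreover, $\varepsilon_{ij}\in(0,1)$ if $\theta_i,\theta_j,\theta_{ij}>0$.
   Context: $Z$ is the normalizing constant. *)

theory Defs
  imports "HOL-Analysis.Analysis"
begin

text \<open>Sources are indexed by 0..m-1. An outcome is a pair (Y, lam) with Y in {-1,1}
  and lam a {-1,1}-valued vector on {..<m} (extensional: undefined outside).
  Unordered pairs of sources are 2-element sets; the pair parameter theta_kl is
  a function of the unordered pair {k,l}.\<close>

definition ising_space :: "nat \<Rightarrow> (real \<times> (nat \<Rightarrow> real)) set" where
  "ising_space m = {-1, 1} \<times> PiE {..<m} (\<lambda>_. {-1, 1})"

definition ising_weight ::
  "nat \<Rightarrow> real \<Rightarrow> (nat \<Rightarrow> real) \<Rightarrow> (nat set \<Rightarrow> real) \<Rightarrow> nat set set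
   \<Rightarrow> real \<times> (nat \<Rightarrow> real) \<Rightarrow> real" where
  "ising_weight m thY th thE E \<omega> =
     exp (thY * fst \<omega> + (\<Sum>k<m. th k * snd \<omega> k * fst \<omega>)
          + (\<Sum>e\<in>E. thE e * (\<Prod>k\<in>e. snd \<omega> k)))"

definition ising_Z ::
  "nat \<Rightarrow> real \<Rightarrow> (nat \<Rightarrow> real) \<Rightarrow> (nat set \<Rightarrow> real) \<Rightarrow> nat set set \<Rightarrow> real" where
  "ising_Z m thY th thE E = (\<Sum>\<omega>\<in>ising_space m. ising_weight m thY th thE E \<omega>)"

definition ising_expect ::
  "nat \<Rightarrow> real \<Rightarrow> (nat \<Rightarrow> real) \<Rightarrow> (nat set \<Rightarrow> real) \<Rightarrow> nat set set
   \<Rightarrow> (real \<times> (nat \<Rightarrow> real) \<Rightarrow> real) \<Rightarrow> real" where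
  "ising_expect m thY th thE E f =
     (\<Sum>\<omega>\<in>ising_space m. ising_weight m thY th thE E \<omega> * f \<omega>) / ising_Z m thY th thE E"

definition pair_set :: "nat \<Rightarrow> nat set set \<Rightarrow> bool" where
  "pair_set m E \<longleftrightarrow>
     (\<forall>e\<in>E. \<exists>k l. k < m \<and> l < m \<and> k \<noteq> l \<and> e = {k, l}) \<and>
     (\<forall>e\<in>E. \<forall>e'\<in>E. e \<noteq> e' \<longrightarrow> e \<inter> e' = {})"

end

theory Submission
  imports Defs
begin

definition fl :: "nat \<Rightarrow> real \<times> (nat \<Rightarrow> real) \<Rightarrow> real \<times> (nat \<Rightarrow> real)" where
  "fl i \<omega> = (fst \<omega>, (snd \<omega>)(i := - snd \<omega> i))"

lemma pair_lt: assumes "pair_set m E" "{i,j} \<in> E" shows "i < m" "j < m"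
proof -
  have "\<forall>e\<in>E. \<exists>k l. k < m \<and> l < m \<and> k \<noteq> l \<and> e = {k, l}"
    using assms(1) unfolding pair_set_def by (rule conjunct1)
  then have "\<exists>k l. k < m \<and> l < m \<and> k \<noteq> l \<and> {i,j} = {k, l}" using assms(2) by (rule bspec)
  then obtain k l where "k < m" "l < m" "{i,j} = {k,l}" by blast
  then show "i < m" "j < m" by (auto simp: doubleton_eq_iff)
qed

lemma pair_disj: assumes "pair_set m E" "{i,j} \<in> E" "e \<in> E" "e \<noteq> {i,j}" shows "i \<notin> e"
proof -
  have "\<forall>e\<in>E. \<forall>e'\<in>E. e \<noteq> e' \<longrightarrow> e \<inter> e' = {}" using assms(1) unfolding pair_set_def by simp
  then have "e \<inter> {i,j} = {}" using assms(2-4) by simp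
  then show ?thesis by auto
qed

lemma E_finite: assumes "pair_set m E" shows "finite E"
proof -
  have "e \<subseteq> {..<m}" if "e \<in> E" for e
  proof -
    have "\<forall>e\<in>E. \<exists>k l. k < m \<and> l < m \<and> k \<noteq> l \<and> e = {k, l}"
      using assms(1) unfolding pair_set_def by (rule conjunct1)
    then have "\<exists>k l. k < m \<and> l < m \<and> k \<noteq> l \<and> e = {k, l}" using that by (rule bspec)
    then obtain k l where "k < m" "l < m" "e = {k,l}" by blast
    then show ?thesis by auto
  qed
  then have "E \<subseteq> Pow {..<m}" by auto
  then show ?thesis by (meson finite_Pow_iff finite_lessThan finite_subset)
qed

lemma space_iff: "\<omega> \<in> ising_space m \<longleftrightarrow> fst \<omega> \<in> {-1,1} \<and> snd \<omega> \<in> PiE {..<m} (\<lambda>_. {-1,1})"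
  unfolding ising_space_def by (rule mem_Times_iff)

lemma space_fst: "\<omega> \<in> ising_space m \<Longrightarrow> fst \<omega> \<in> {-1,1}"
  unfolding space_iff by (erule conjunct1)

lemma space_snd: "\<omega> \<in> ising_space m \<Longrightarrow> k < m \<Longrightarrow> snd \<omega> k \<in> {-1,1}"
  unfolding space_iff using PiE_mem by fastforce

lemma fl_space: assumes "i < m" "\<omega> \<in> ising_space m" shows "fl i \<omega> \<in> ising_space m"
proof -
  have f: "fst \<omega> \<in> {-1,1}" and s: "snd \<omega> \<in> PiE {..<m} (\<lambda>_. {-1,1::real})"
    using assms(2) unfolding space_iff by auto
  have "snd \<omega> i \<in> {-1,1}" using s assms(1) PiE_mem by fastforce
  then have "- snd \<omega> i \<in> {-1,1::real}" by auto
  then have "(snd \<omega>)(i := - snd \<omega> i) \<in> PiE (insert i {..<m}) (\<lambda>_. {-1,1::real})"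
    by (rule PiE_fun_upd[OF _ s])
  moreover have "insert i {..<m} = {..<m}" using assms(1) by auto
  ultimately show ?thesis unfolding space_iff fl_def using f by simp
qed

lemma fl_fl: "fl i (fl i \<omega>) = \<omega>"
  unfolding fl_def by auto

lemma sum_fl: assumes "i < m"
  shows "(\<Sum>\<omega>\<in>ising_space m. f \<omega>) = (\<Sum>\<omega>\<in>ising_space m. f (fl i \<omega>))"
  by (rule sum.reindex_bij_witness[where i="fl i" and j="fl i"])
     (auto simp: fl_fl fl_space assms)

lemma sum_upd: fixes F :: "'a \<Rightarrow> 'b \<Rightarrow> real" assumes "finite A" "i \<in> A"
  shows "(\<Sum>k\<in>A. F k ((g(i:=v)) k)) = (\<Sum>k\<in>A. F k (g k)) - F i (g i) + F i v"
proof -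
  have "(\<Sum>k\<in>A. F k ((g(i:=v)) k)) = F i v + (\<Sum>k\<in>A-{i}. F k ((g(i:=v)) k))"
    using assms by (simp add: sum.remove)
  also have "(\<Sum>k\<in>A-{i}. F k ((g(i:=v)) k)) = (\<Sum>k\<in>A-{i}. F k (g k))"
    by (rule sum.cong) auto
  also have "\<dots> = (\<Sum>k\<in>A. F k (g k)) - F i (g i)"
    using assms by (simp add: sum.remove)
  finally show ?thesis by simp
qed

lemma exp_aux: fixes y s1 s2 c d e :: real assumes "e = - c - d" shows "exp (y + (s1 - c) + (s2 - d)) = exp (y + s1 + s2) * exp e"
proof -
  have "y + (s1 - c) + (s2 - d) = (y + s1 + s2) + e" using assms by simp
  then show ?thesis by (metis exp_add)
qed

lemma flip_weight:
  assumes P: "pair_set m E" and e: "{i,j} \<in> E" and ij: "i \<noteq> j"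
  shows "ising_weight m thY th thE E (fl i \<omega>) = ising_weight m thY th thE E \<omega> *
     exp (- 2 * th i * snd \<omega> i * fst \<omega> - 2 * thE {i,j} * snd \<omega> i * snd \<omega> j)"
proof -
  have im: "i < m" using pair_lt[OF P e] by simp
  have fE: "finite E" using E_finite[OF P] .
  let ?l = "snd \<omega>" and ?Y = "fst \<omega>"
  have s1: "(\<Sum>k<m. th k * (?l(i := - ?l i)) k * ?Y) = (\<Sum>k<m. th k * ?l k * ?Y) - 2 * th i * ?l i * ?Y"
    using sum_upd[of "{..<m}" i "\<lambda>k v. th k * v * ?Y" ?l "- ?l i"] im by simp
  have s2: "(\<Sum>e\<in>E. thE e * (\<Prod>k\<in>e. (?l(i := - ?l i)) k)) =
     (\<Sum>e\<in>E. thE e * (\<Prod>k\<in>e. ?l k)) - 2 * thE {i,j} * ?l i * ?l j"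
  proof -
    have "(\<Sum>e\<in>E. thE e * (\<Prod>k\<in>e. (?l(i := - ?l i)) k)) =
       thE {i,j} * (\<Prod>k\<in>{i,j}. (?l(i := - ?l i)) k) + (\<Sum>e\<in>E-{{i,j}}. thE e * (\<Prod>k\<in>e. (?l(i := - ?l i)) k))"
      using fE e by (simp add: sum.remove)
    also have "(\<Sum>e\<in>E-{{i,j}}. thE e * (\<Prod>k\<in>e. (?l(i := - ?l i)) k)) = (\<Sum>e\<in>E-{{i,j}}. thE e * (\<Prod>k\<in>e. ?l k))"
    proof (rule sum.cong[OF refl])
      fix e assume "e \<in> E - {{i,j}}"
      then have "i \<notin> e" using pair_disj[OF P e] by blast
      then show "thE e * (\<Prod>k\<in>e. (?l(i := - ?l i)) k) = thE e * (\<Prod>k\<in>e. ?l k)"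
        by (metis (no_types, lifting) fun_upd_other prod.cong)
    qed
    also have "\<dots> = (\<Sum>e\<in>E. thE e * (\<Prod>k\<in>e. ?l k)) - thE {i,j} * (\<Prod>k\<in>{i,j}. ?l k)"
      using fE e by (simp add: sum.remove)
    finally show ?thesis using ij by simp
  qed
  show ?thesis
    unfolding ising_weight_def fl_def fst_conv snd_conv s1 s2
    by (rule exp_aux) (simp add: algebra_simps)
qed

definition q where
  "q m thY th thE E i j si sj = (\<Sum>\<omega>\<in>ising_space m. ising_weight m thY th thE E \<omega> *
      (if fst \<omega> * snd \<omega> i = si \<and> fst \<omega> * snd \<omega> j = sj then 1 else 0))"

lemma q_swap: "q m thY th thE E j i si sj = q m thY th thE E i j sj si"
  unfolding q_def by (simp add: conj_commute)

lemma Ysq: "\<omega> \<in> ising_space m \<Longrightarrow> fst \<omega> * fst \<omega> = 1"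
  using space_fst by fastforce

lemma q_flip:
  assumes P: "pair_set m E" and e: "{i,j} \<in> E" and ij: "i \<noteq> j"
  shows "q m thY th thE E i j (-1) sj = exp (- 2 * th i - 2 * thE {i,j} * sj) * q m thY th thE E i j 1 sj"
proof -
  have im: "i < m" using pair_lt[OF P e] by simp
  let ?w = "ising_weight m thY th thE E"
  have "q m thY th thE E i j (-1) sj = (\<Sum>\<omega>\<in>ising_space m. ?w (fl i \<omega>) *
      (if fst (fl i \<omega>) * snd (fl i \<omega>) i = -1 \<and> fst (fl i \<omega>) * snd (fl i \<omega>) j = sj then 1 else 0))"
    unfolding q_def by (rule sum_fl[OF im])
  also have "\<dots> = (\<Sum>\<omega>\<in>ising_space m. exp (- 2 * th i - 2 * thE {i,j} * sj) * (?w \<omega> *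
      (if fst \<omega> * snd \<omega> i = 1 \<and> fst \<omega> * snd \<omega> j = sj then 1 else 0)))"
  proof (rule sum.cong[OF refl])
    fix \<omega> assume om: "\<omega> \<in> ising_space m"
    have Y2: "fst \<omega> * fst \<omega> = 1" using Ysq[OF om] .
    show "?w (fl i \<omega>) *
      (if fst (fl i \<omega>) * snd (fl i \<omega>) i = -1 \<and> fst (fl i \<omega>) * snd (fl i \<omega>) j = sj then 1 else 0) =
      exp (- 2 * th i - 2 * thE {i,j} * sj) * (?w \<omega> *
      (if fst \<omega> * snd \<omega> i = 1 \<and> fst \<omega> * snd \<omega> j = sj then 1 else 0))"
    proof (cases "fst \<omega> * snd \<omega> i = 1 \<and> fst \<omega> * snd \<omega> j = sj")
      case True
      then have a: "snd \<omega> i * fst \<omega> = 1" by (simp add: mult.commute)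
      have b: "snd \<omega> i * snd \<omega> j = sj"
      proof -
        have "snd \<omega> i * snd \<omega> j = (fst \<omega> * snd \<omega> i) * (fst \<omega> * snd \<omega> j)"
          using Y2 by (metis mult.assoc mult.left_commute mult_1)
        then show ?thesis using True by simp
      qed
      have "- 2 * th i * snd \<omega> i * fst \<omega> - 2 * thE {i, j} * snd \<omega> i * snd \<omega> j
         = - 2 * th i * (snd \<omega> i * fst \<omega>) - 2 * thE {i, j} * (snd \<omega> i * snd \<omega> j)"
        by (simp add: mult.assoc)
      then show ?thesis using True ij a b unfolding flip_weight[OF P e ij]
        by (simp add: fl_def)
    next
      case False
      then show ?thesis using ij by (auto simp: fl_def)
    qed
  qed
  also have "\<dots> = exp (- 2 * th i - 2 * thE {i,j} * sj) * q m thY th thE E i j 1 sj"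
    unfolding q_def by (simp add: sum_distrib_left)
  finally show ?thesis .
qed

lemma pm1: "a \<in> {-1,1::real} \<Longrightarrow> b \<in> {-1,1} \<Longrightarrow> a * b \<in> {-1,1}"
  by auto

lemma decomp:
  assumes "i < m" "j < m"
  shows "(\<Sum>\<omega>\<in>ising_space m. ising_weight m thY th thE E \<omega> * G (fst \<omega> * snd \<omega> i) (fst \<omega> * snd \<omega> j))
     = G 1 1 * q m thY th thE E i j 1 1 + G 1 (-1) * q m thY th thE E i j 1 (-1)
     + G (-1) 1 * q m thY th thE E i j (-1) 1 + G (-1) (-1) * q m thY th thE E i j (-1) (-1)"
proof -
  let ?w = "ising_weight m thY th thE E"
  let ?I = "\<lambda>\<omega> si sj. (if fst \<omega> * snd \<omega> i = si \<and> fst \<omega> * snd \<omega> j = sj then 1 else 0::real)"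
  have pw: "?w \<omega> * G (fst \<omega> * snd \<omega> i) (fst \<omega> * snd \<omega> j) =
     G 1 1 * (?w \<omega> * ?I \<omega> 1 1) + G 1 (-1) * (?w \<omega> * ?I \<omega> 1 (-1))
     + G (-1) 1 * (?w \<omega> * ?I \<omega> (-1) 1) + G (-1) (-1) * (?w \<omega> * ?I \<omega> (-1) (-1))"
    if om: "\<omega> \<in> ising_space m" for \<omega>
  proof -
    have "fst \<omega> * snd \<omega> i \<in> {-1,1}" "fst \<omega> * snd \<omega> j \<in> {-1,1}"
      using pm1 space_fst[OF om] space_snd[OF om] assms by auto
    then show ?thesis by auto
  qed
  show ?thesis
    unfolding q_def sum_distrib_left sum.distrib[symmetric]
    by (rule sum.cong[OF refl]) (rule pw)
qed

lemma alg:
  fixes X Y U :: real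
  assumes X: "X > 0" and Y: "Y > 0" and U: "U > 0"
  defines "A \<equiv> X^2*Y^2*U^2" and "B \<equiv> X^2" and "C \<equiv> Y^2" and "D \<equiv> U^2"
  defines "S \<equiv> A + B + C + D"
  defines "z \<equiv> X*Y*U + X/(Y*U) + Y/(X*U) + U/(X*Y)"
  defines "z' \<equiv> X*Y + X/Y + Y/X + 1/(X*Y)"
  defines "Di \<equiv> 2 / (z * z') * (U - 1/U) * (Y^2 - 1/Y^2)"
  defines "Dj \<equiv> 2 / (z * z') * (U - 1/U) * (X^2 - 1/X^2)"
  defines "Dij \<equiv> 2 / (z * z') * (U - 1/U) * (X^2 + 1/X^2 + Y^2 + 1/Y^2)"
  defines "ai \<equiv> 2 / z' * X * (Y + 1/Y) - 1"
  defines "aj \<equiv> 2 / z' * Y * (X + 1/X) - 1"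
  shows "(A - B - C + D)/S - (A+B-C-D)/S*((A-B+C-D)/S) = Dij - Di * aj - Dj * ai - Di * Dj"
proof -
  define K where "K = (X^2 + 1) * (Y^2 + 1)"
  have x1: "X^2 + 1 > 0" "Y^2 + 1 > 0" by (smt (verit) zero_le_power2)+
  have Kp: "K > 0" unfolding K_def using x1 by simp
  have Spos: "S > 0" unfolding S_def A_def B_def C_def D_def using X Y U by (smt (verit) zero_le_power2 zero_less_power mult_pos_pos)
  have z: "z = S / (X*Y*U)"
    unfolding z_def S_def A_def B_def C_def D_def using X Y U by (simp add: field_simps power2_eq_square)
  have z': "z' = K / (X*Y)"
    unfolding z'_def K_def using X Y U by (simp add: field_simps power2_eq_square)
  define c where "c = 2 * X^2 * Y^2 * (U^2 - 1) / (S * K)"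
  have cc: "2 / (z * z') * (U - 1/U) = c"
    unfolding z z' c_def using X Y U Spos Kp by (simp add: field_simps power2_eq_square)
  have gen: "\<And>p r. p > 0 \<Longrightarrow> r > 0 \<Longrightarrow> 2 / ((p*r)/(X*Y)) * X * (r/Y) = 2*X^2/p"
    using X Y by (simp add: field_simps power2_eq_square)
  have "Y + 1/Y = (Y^2+1)/Y" using Y by (simp add: field_simps power2_eq_square)
  then have "2 / z' * X * (Y + 1/Y) = 2 * X^2 / (X^2 + 1)"
    unfolding z' K_def using gen x1 by simp
  then have ai: "ai = (X^2 - 1) / (X^2 + 1)"
    unfolding ai_def using x1 by (simp add: field_simps)
  have gen2: "\<And>p r. p > 0 \<Longrightarrow> r > 0 \<Longrightarrow> 2 / ((p*r)/(X*Y)) * Y * (p/X) = 2*Y^2/r"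
    using X Y by (simp add: field_simps power2_eq_square)
  have "X + 1/X = (X^2+1)/X" using X by (simp add: field_simps power2_eq_square)
  then have "2 / z' * Y * (X + 1/X) = 2 * Y^2 / (Y^2 + 1)"
    unfolding z' K_def using gen2 x1 by simp
  then have aj: "aj = (Y^2 - 1) / (Y^2 + 1)"
    unfolding aj_def using x1 by (simp add: field_simps)
  have Di: "Di = c * (Y^2 - 1/Y^2)" unfolding Di_def cc ..
  have Dj: "Dj = c * (X^2 - 1/X^2)" unfolding Dj_def cc ..
  have Dij: "Dij = c * (X^2 + 1/X^2 + Y^2 + 1/Y^2)" unfolding Dij_def cc ..
  have g1: "\<And>x y. x > 0 \<Longrightarrow> y > 0 \<Longrightarrow>
      c * (x + 1/x + y + 1/y) - c * (y - 1/y) * ((y - 1) / (y + 1)) - c * (x - 1/x) * ((x - 1) / (x + 1)) = 4 * c"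
  proof -
    fix x y :: real assume "x > 0" "y > 0"
    have hy: "(y - 1/y) * ((y - 1) / (y + 1)) = (y - 1) * (y - 1) / y"
    proof -
      have "y - 1/y = (y - 1) * (y + 1) / y" using \<open>y > 0\<close> by (simp add: field_simps algebra_simps)
      moreover have "y + 1 \<noteq> 0" using \<open>y > 0\<close> by simp
      ultimately show ?thesis by simp
    qed
    have hx: "(x - 1/x) * ((x - 1) / (x + 1)) = (x - 1) * (x - 1) / x"
    proof -
      have "x - 1/x = (x - 1) * (x + 1) / x" using \<open>x > 0\<close> by (simp add: field_simps algebra_simps)
      moreover have "x + 1 \<noteq> 0" using \<open>x > 0\<close> by simp
      ultimately show ?thesis by simp
    qed
    have "c * (x + 1/x + y + 1/y) - c * (y - 1/y) * ((y - 1) / (y + 1)) - c * (x - 1/x) * ((x - 1) / (x + 1))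
      = c * (x + 1/x + y + 1/y - (y - 1) * (y - 1) / y - (x - 1) * (x - 1) / x)"
      unfolding mult.assoc[of c] hx hy by (simp only: right_diff_distrib)
    also have "x + 1/x + y + 1/y - (y - 1) * (y - 1) / y - (x - 1) * (x - 1) / x = 4"
      using \<open>x > 0\<close> \<open>y > 0\<close> by (simp add: field_simps)
    finally show "c * (x + 1/x + y + 1/y) - c * (y - 1/y) * ((y - 1) / (y + 1)) - c * (x - 1/x) * ((x - 1) / (x + 1)) = 4 * c"
      by simp
  qed
  have r1: "Dij - Di * aj - Dj * ai = 4 * c"
    unfolding Dij Di Dj ai aj using X Y g1[of "X^2" "Y^2"] by simp
  have g2: "\<And>x y. x > 0 \<Longrightarrow> y > 0 \<Longrightarrow>
      c * (y - 1/y) * (c * (x - 1/x)) = c * c * ((x + 1) * (y + 1)) * (x - 1) * (y - 1) / (x * y)"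
  proof -
    fix x y :: real assume "x > 0" "y > 0"
    then show "c * (y - 1/y) * (c * (x - 1/x)) = c * c * ((x + 1) * (y + 1)) * (x - 1) * (y - 1) / (x * y)"
      by (simp add: field_simps)
  qed
  have r2: "Di * Dj = c * c * K * (X^2 - 1) * (Y^2 - 1) / (X^2 * Y^2)"
    unfolding Di Dj K_def using X Y g2[of "X^2" "Y^2"] by simp
  have key: "2 * S - (U^2 - 1) * (X^2 - 1) * (Y^2 - 1) = (U^2 + 1) * K"
    unfolding S_def A_def B_def C_def D_def K_def by (simp add: algebra_simps)
  have rhs: "Dij - Di * aj - Dj * ai - Di * Dj = 4 * X^2 * Y^2 * (U^2 - 1) * (U^2 + 1) / S^2"
  proof -
    have "Dij - Di * aj - Dj * ai - Di * Dj = c * (4 - c * K * (X^2 - 1) * (Y^2 - 1) / (X^2 * Y^2))"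
      unfolding r2 using r1 by (simp add: algebra_simps)
    also have "c * K * (X^2 - 1) * (Y^2 - 1) / (X^2 * Y^2) = 2 * (U^2 - 1) * (X^2 - 1) * (Y^2 - 1) / S"
      unfolding c_def using X Y Kp Spos by (simp add: field_simps)
    also have "4 - 2 * (U^2 - 1) * (X^2 - 1) * (Y^2 - 1) / S = 2 * (U^2 + 1) * K / S"
      using key Spos by (simp add: field_simps)
    also have "c * (2 * (U^2 + 1) * K / S) = 4 * X^2 * Y^2 * (U^2 - 1) * (U^2 + 1) / S^2"
      unfolding c_def using Kp Spos by (simp add: field_simps power2_eq_square)
    finally show ?thesis .
  qed
  have lhs: "(A - B - C + D)/S - (A+B-C-D)/S*((A-B+C-D)/S) = 4 * (A * D - B * C) / S^2"
  proof -
    have "(A - B - C + D)/S - (A+B-C-D)/S*((A-B+C-D)/S) = ((A - B - C + D) * S - (A+B-C-D)*(A-B+C-D)) / S^2"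
      using Spos by (simp add: field_simps power2_eq_square)
    also have "(A - B - C + D) * S - (A+B-C-D)*(A-B+C-D) = 4 * (A * D - B * C)"
      unfolding S_def by (simp add: algebra_simps)
    finally show ?thesis .
  qed
  have "4 * (A * D - B * C) = 4 * X^2 * Y^2 * (U^2 - 1) * (U^2 + 1)"
    unfolding A_def B_def C_def D_def by (simp add: algebra_simps power2_eq_square)
  then show ?thesis using lhs rhs by simp
qed
lemma epsform:
  fixes A B C D S :: real
  assumes "S = A + B + C + D" and Sp: "S > 0"
  shows "(A - B - C + D)/S - (A+B-C-D)/S*((A-B+C-D)/S) = 4 * (A * D - B * C) / S^2"
proof -
  have "(A - B - C + D)/S - (A+B-C-D)/S*((A-B+C-D)/S) = ((A - B - C + D) * S - (A+B-C-D)*(A-B+C-D)) / S^2"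
    using Sp by (simp add: field_simps power2_eq_square)
  also have "(A - B - C + D) * S - (A+B-C-D)*(A-B+C-D) = 4 * (A * D - B * C)"
    unfolding assms(1) by (simp add: algebra_simps)
  finally show ?thesis .
qed

lemma expm2: "exp (- 2 * (x::real)) = 1 / exp x ^ 2"
proof -
  have "- 2 * x = - (2 * x)" by simp
  then show ?thesis by (simp only: exp_minus' exp_double)
qed

theorem lemma5:
  fixes m :: nat and thY :: real and th :: "nat \<Rightarrow> real"
    and thE :: "nat set \<Rightarrow> real" and E :: "nat set set" and i j :: nat
  assumes "pair_set m E" and "{i, j} \<in> E" and "i \<noteq> j"
  defines "EE \<equiv> ising_expect m thY th thE E"
  defines "eps \<equiv> EE (\<lambda>\<omega>. snd \<omega> i * snd \<omega> j)
                 - EE (\<lambda>\<omega>. snd \<omega> i * fst \<omega>) * EE (\<lambda>\<omega>. snd \<omega> j * fst \<omega>)"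
  defines "tij \<equiv> thE {i, j}"
  defines "z \<equiv> (\<Sum>si\<in>{-1,1::real}. \<Sum>sj\<in>{-1,1::real}.
                  exp (si * th i + sj * th j + si * sj * tij))"
  defines "z' \<equiv> (\<Sum>si\<in>{-1,1::real}. \<Sum>sj\<in>{-1,1::real}. exp (si * th i + sj * th j))"
  defines "Di \<equiv> 2 / (z * z') * (exp tij - exp (- tij)) * (exp (2 * th j) - exp (- 2 * th j))"
  defines "Dj \<equiv> 2 / (z * z') * (exp tij - exp (- tij)) * (exp (2 * th i) - exp (- 2 * th i))"
  defines "Dij \<equiv> 2 / (z * z') * (exp tij - exp (- tij)) *
                   (exp (2 * th i) + exp (- 2 * th i) + exp (2 * th j) + exp (- 2 * th j))"
  defines "ai \<equiv> 2 / z' * exp (th i) * (exp (th j) + exp (- th j)) - 1"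
  defines "aj \<equiv> 2 / z' * exp (th j) * (exp (th i) + exp (- th i)) - 1"
  shows "eps = Dij - Di * aj - Dj * ai - Di * Dj \<and>
         (th i > 0 \<and> th j > 0 \<and> tij > 0 \<longrightarrow> 0 < eps \<and> eps < 1)"
proof -
  note P = assms(1) and e = assms(2) and ij = assms(3)
  have im: "i < m" and jm: "j < m" using pair_lt[OF P e] by auto
  have e': "{j,i} \<in> E" using e by (simp add: insert_commute)
  let ?w = "ising_weight m thY th thE E"
  let ?q = "q m thY th thE E i j"
  define Q where "Q = ?q 1 1"
  have q1: "?q (-1) 1 = exp (- 2 * th i - 2 * tij * 1) * Q"
    unfolding Q_def tij_def by (rule q_flip[OF P e ij])
  have q3: "?q 1 (-1) = exp (- 2 * th j - 2 * tij * 1) * Q"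
    using q_flip[OF P e' ij[symmetric], where sj=1 and thY=thY and th=th and thE=thE] unfolding Q_def tij_def
    by (simp add: q_swap insert_commute)
  have q2: "?q (-1) (-1) = exp (- 2 * th i - 2 * tij * (-1)) * ?q 1 (-1)"
    unfolding tij_def by (rule q_flip[OF P e ij])
  define Zv where "Zv = ising_Z m thY th thE E"
  have Z: "Zv = Q + ?q 1 (-1) + ?q (-1) 1 + ?q (-1) (-1)"
    unfolding Zv_def ising_Z_def Q_def
    using decomp[OF im jm, of thY th thE E "\<lambda>_ _. 1"] by simp
  have Zpos: "Zv > 0"
  proof -
    have "(1, \<lambda>k\<in>{..<m}. 1) \<in> ising_space m" unfolding ising_space_def by auto
    then have "ising_space m \<noteq> {}" by blast
    moreover have "finite (ising_space m)" unfolding ising_space_def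
      by (simp add: finite_PiE)
    ultimately show ?thesis unfolding Zv_def ising_Z_def
      by (intro sum_pos) (auto simp: ising_weight_def)
  qed
  have Eij: "EE (\<lambda>\<omega>. snd \<omega> i * snd \<omega> j) = (Q - ?q 1 (-1) - ?q (-1) 1 + ?q (-1) (-1)) / Zv"
  proof -
    have "(\<Sum>\<omega>\<in>ising_space m. ?w \<omega> * (snd \<omega> i * snd \<omega> j)) =
          (\<Sum>\<omega>\<in>ising_space m. ?w \<omega> * ((fst \<omega> * snd \<omega> i) * (fst \<omega> * snd \<omega> j)))"
    proof (rule sum.cong[OF refl])
      fix \<omega> assume "\<omega> \<in> ising_space m"
      then have "fst \<omega> * fst \<omega> = 1" by (rule Ysq)
      then show "?w \<omega> * (snd \<omega> i * snd \<omega> j) = ?w \<omega> * ((fst \<omega> * snd \<omega> i) * (fst \<omega> * snd \<omega> j))"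
        by (metis mult.assoc mult.left_commute mult_1)
    qed
    also have "\<dots> = (Q - ?q 1 (-1) - ?q (-1) 1 + ?q (-1) (-1))"
      using decomp[OF im jm, of thY th thE E "\<lambda>a b. a * b"] unfolding Q_def by simp
    finally show ?thesis unfolding EE_def ising_expect_def Zv_def by simp
  qed
  have Ei: "EE (\<lambda>\<omega>. snd \<omega> i * fst \<omega>) = (Q + ?q 1 (-1) - ?q (-1) 1 - ?q (-1) (-1)) / Zv"
  proof -
    have "(\<Sum>\<omega>\<in>ising_space m. ?w \<omega> * (snd \<omega> i * fst \<omega>)) =
          (\<Sum>\<omega>\<in>ising_space m. ?w \<omega> * (fst \<omega> * snd \<omega> i))"
      by (simp add: mult.commute)
    also have "\<dots> = (Q + ?q 1 (-1) - ?q (-1) 1 - ?q (-1) (-1))"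
      using decomp[OF im jm, of thY th thE E "\<lambda>a b. a"] unfolding Q_def by simp
    finally show ?thesis unfolding EE_def ising_expect_def Zv_def by simp
  qed
  have Ej: "EE (\<lambda>\<omega>. snd \<omega> j * fst \<omega>) = (Q - ?q 1 (-1) + ?q (-1) 1 - ?q (-1) (-1)) / Zv"
  proof -
    have "(\<Sum>\<omega>\<in>ising_space m. ?w \<omega> * (snd \<omega> j * fst \<omega>)) =
          (\<Sum>\<omega>\<in>ising_space m. ?w \<omega> * (fst \<omega> * snd \<omega> j))"
      by (simp add: mult.commute)
    also have "\<dots> = (Q - ?q 1 (-1) + ?q (-1) 1 - ?q (-1) (-1))"
      using decomp[OF im jm, of thY th thE E "\<lambda>a b. b"] unfolding Q_def by simp
    finally show ?thesis unfolding EE_def ising_expect_def Zv_def by simp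
  qed
  define X where "X = exp (th i)"
  define Yv where "Yv = exp (th j)"
  define U where "U = exp tij"
  have Xp: "X > 0" and Yp: "Yv > 0" and Up: "U > 0" unfolding X_def Yv_def U_def by auto
  define A where "A = X^2*Yv^2*U^2"
  define B where "B = X^2"
  define C where "C = Yv^2"
  define D where "D = U^2"
  define S where "S = A + B + C + D"
  define \<kappa> where "\<kappa> = Q / (X^2*Yv^2*U^2)"
  have e1: "exp (- 2 * th i - 2 * tij * 1) = 1 / (X^2 * U^2)"
    unfolding X_def U_def by (simp add: exp_diff exp_add exp_minus' exp_double)
  have e2: "exp (- 2 * th j - 2 * tij * 1) = 1 / (Yv^2 * U^2)"
    unfolding Yv_def U_def by (simp add: exp_diff exp_add exp_minus' exp_double)
  have e3: "exp (- 2 * th i - 2 * tij * (-1)) = U^2 / X^2"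
    unfolding X_def U_def by (simp add: exp_diff exp_add exp_minus' exp_double)
  have kA: "Q = \<kappa> * A" unfolding \<kappa>_def A_def using Xp Yp Up by simp
  have kB: "?q 1 (-1) = \<kappa> * B" unfolding q3 e2 \<kappa>_def B_def using Xp Yp Up
    by (simp add: field_simps power2_eq_square)
  have kC: "?q (-1) 1 = \<kappa> * C" unfolding q1 e1 \<kappa>_def C_def using Xp Yp Up
    by (simp add: field_simps power2_eq_square)
  have kD: "?q (-1) (-1) = \<kappa> * D" unfolding q2 q3 e3 e2 \<kappa>_def D_def using Xp Yp Up
    by (simp add: field_simps power2_eq_square)
  have kS: "Zv = \<kappa> * S" unfolding Z kA kB kC kD S_def by (simp add: algebra_simps)
  have Spos: "S > 0" unfolding S_def A_def B_def C_def D_def using Xp Yp Up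
    by (smt (verit) zero_le_power2 zero_less_power mult_pos_pos)
  have k0: "\<kappa> \<noteq> 0" using kS Zpos by auto
  have epsS: "eps = (A - B - C + D)/S - (A+B-C-D)/S*((A-B+C-D)/S)"
  proof -
    have "eps = (\<kappa> * (A - B - C + D)) / (\<kappa> * S) - (\<kappa> * (A+B-C-D)) / (\<kappa> * S) * ((\<kappa> * (A-B+C-D)) / (\<kappa> * S))"
      unfolding eps_def Eij Ei Ej kS[symmetric] kA kB kC kD by (simp add: algebra_simps)
    then show ?thesis using k0 by simp
  qed
  have zX: "z = X*Yv*U + X/(Yv*U) + Yv/(X*U) + U/(X*Yv)"
    unfolding z_def X_def Yv_def U_def by (simp add: exp_add exp_diff exp_minus field_simps)
  have z'X: "z' = X*Yv + X/Yv + Yv/X + 1/(X*Yv)"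
    unfolding z'_def X_def Yv_def by (simp add: exp_add exp_diff exp_minus field_simps)
  have part1: "eps = Dij - Di * aj - Dj * ai - Di * Dj"
    unfolding epsS Dij_def Di_def Dj_def ai_def aj_def zX z'X A_def B_def C_def D_def S_def
    using alg[OF Xp Yp Up]
    unfolding X_def Yv_def U_def
    by (simp add: expm2 exp_double exp_minus')
  have part2: "0 < eps \<and> eps < 1" if pos: "tij > 0"
  proof -
    have U1: "U > 1" unfolding U_def using pos by simp
    have ef: "eps = 4 * (A * D - B * C) / S^2" unfolding epsS using epsform[OF S_def Spos] .
    have Bp: "B * C > 0" unfolding B_def C_def using Xp Yp by simp
    have ADBC: "A * D - B * C > 0"
    proof -
      have "A * D - B * C = X^2 * Yv^2 * (U^2 * U^2 - 1)" unfolding A_def B_def C_def D_def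
        by (simp add: algebra_simps)
      moreover have "U^2 * U^2 > 1" using U1
        by (metis less_1_mult one_less_power zero_less_numeral)
      ultimately show ?thesis using Xp Yp by simp
    qed
    have "4 * (A * D) \<le> S^2"
    proof -
      have "S^2 = (A - D)^2 + 4 * (A * D) + (B + C) * (2 * (A + D) + (B + C))"
        unfolding S_def by (simp add: algebra_simps power2_eq_square)
      moreover have "(B + C) * (2 * (A + D) + (B + C)) \<ge> 0"
        unfolding A_def B_def C_def D_def by simp
      ultimately show ?thesis by (smt (verit) zero_le_power2)
    qed
    then have "4 * (A * D - B * C) < S^2" using Bp by simp
    then show ?thesis unfolding ef using ADBC Spos by simp
  qed
  show ?thesis using part1 part2 by blast
qed

end
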